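(* Let $K, L$ be compact convex subsets of $\mathbb{R}^n$ and let $\psi: \mathbb{R}^n \to \mathbb{R}^n$ be a nonsingular linear transformation. Then, for every unit vector $u$, $L_u$ contains a translate of $K_u$ if and only if, for every unit vector $u$, $(\psi L)_u$ contains a translate of $(\psi K)_u$.
   Context: For a set $S \subseteq \mathbb{R}^n$ and a unit vector $u$, $S_u$ denotes the orthogonal projection of $S$ onto the hyperplane $u^\perp$. "$A$ contains a translate of $B$" means $B + w \subseteq A$ for some vector $w$ (in $u^\perp$). *)

theory Defs
  imports "HOL-Analysis.Analysis"
begin

definition proj_hyp :: "'a::euclidean_space \<Rightarrow> 'a set \<Rightarrow> 'a set" where
  "proj_hyp u S = (\<lambda>x. x - (x \<bullet> u) *\<^sub>R u) ` S"

definition contains_translate :: "'a::euclidean_space \<Rightarrow> 'a set \<Rightarrow> 'a set \<Rightarrow> bool" where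
  "contains_translate u A B \<longleftrightarrow> (\<exists>w. w \<bullet> u = 0 \<and> (\<lambda>x. x + w) ` B \<subseteq> A)"

end

theory Submission
  imports Defs
begin

definition QQ :: "'a::euclidean_space set \<Rightarrow> 'a set \<Rightarrow> 'a \<Rightarrow> bool" where
  "QQ K L v \<longleftrightarrow> (\<exists>w. \<forall>x\<in>K. \<exists>t. x + w + t *\<^sub>R v \<in> L)"

lemma ct_iff:
  fixes u :: "'a::euclidean_space"
  assumes "norm u = 1"
  shows "contains_translate u (proj_hyp u L) (proj_hyp u K) \<longleftrightarrow> QQ K L u"
proof
  have uu: "u \<bullet> u = 1" using assms by (simp add: dot_square_norm)
  assume "contains_translate u (proj_hyp u L) (proj_hyp u K)"
  then obtain w where w: "w \<bullet> u = 0" "(\<lambda>x. x + w) ` proj_hyp u K \<subseteq> proj_hyp u L"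
    unfolding contains_translate_def by blast
  show "QQ K L u" unfolding QQ_def
  proof (rule exI[of _ w], rule ballI)
    fix x assume "x \<in> K"
    then have "x - (x \<bullet> u) *\<^sub>R u + w \<in> proj_hyp u L" using w(2) unfolding proj_hyp_def by blast
    then obtain y where y: "y \<in> L" "x - (x \<bullet> u) *\<^sub>R u + w = y - (y \<bullet> u) *\<^sub>R u"
      unfolding proj_hyp_def by blast
    have "x + w + ((y \<bullet> u) - (x \<bullet> u)) *\<^sub>R u = y" using y(2)
      by (simp add: algebra_simps)
    then show "\<exists>t. x + w + t *\<^sub>R u \<in> L" using y(1) by metis
  qed
next
  have uu: "u \<bullet> u = 1" using assms by (simp add: dot_square_norm)
  assume "QQ K L u"
  then obtain w where w: "\<forall>x\<in>K. \<exists>t. x + w + t *\<^sub>R u \<in> L" unfolding QQ_def by blast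
  define w' where "w' = w - (w \<bullet> u) *\<^sub>R u"
  have w'u: "w' \<bullet> u = 0" unfolding w'_def using uu by (simp add: inner_diff_left)
  have "(\<lambda>x. x + w') ` proj_hyp u K \<subseteq> proj_hyp u L"
  proof
    fix z assume "z \<in> (\<lambda>x. x + w') ` proj_hyp u K"
    then obtain x where x: "x \<in> K" "z = x - (x \<bullet> u) *\<^sub>R u + w'" unfolding proj_hyp_def by blast
    obtain t where t: "x + w + t *\<^sub>R u \<in> L" using w x(1) by blast
    let ?y = "x + w + t *\<^sub>R u"
    have "?y \<bullet> u = x \<bullet> u + w \<bullet> u + t" using uu by (simp add: inner_add_left)
    then have "?y - (?y \<bullet> u) *\<^sub>R u = z" unfolding x(2) w'_def by (simp add: algebra_simps)
    then show "z \<in> proj_hyp u L" unfolding proj_hyp_def using t by force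
  qed
  then show "contains_translate u (proj_hyp u L) (proj_hyp u K)"
    unfolding contains_translate_def using w'u by blast
qed

lemma QQ_scale:
  assumes "c \<noteq> 0"
  shows "QQ K L (c *\<^sub>R v) \<longleftrightarrow> QQ K L v"
proof
  assume "QQ K L (c *\<^sub>R v)"
  then show "QQ K L v" unfolding QQ_def by (metis scaleR_scaleR)
next
  assume "QQ K L v"
  then obtain w where w: "\<forall>x\<in>K. \<exists>t. x + w + t *\<^sub>R v \<in> L" unfolding QQ_def by blast
  have "\<forall>x\<in>K. \<exists>t. x + w + t *\<^sub>R (c *\<^sub>R v) \<in> L"
  proof
    fix x assume "x \<in> K"
    then obtain t where "x + w + t *\<^sub>R v \<in> L" using w by blast
    moreover have "(t / c) *\<^sub>R (c *\<^sub>R v) = t *\<^sub>R v" using assms by simp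
    ultimately show "\<exists>t. x + w + t *\<^sub>R (c *\<^sub>R v) \<in> L" by metis
  qed
  then show "QQ K L (c *\<^sub>R v)" unfolding QQ_def by blast
qed

lemma all_QQ:
  "(\<forall>u::'a::euclidean_space. norm u = 1 \<longrightarrow> QQ K L u) \<longleftrightarrow> (\<forall>v. v \<noteq> 0 \<longrightarrow> QQ K L v)"
proof safe
  fix v :: 'a assume H: "\<forall>u. norm u = 1 \<longrightarrow> QQ K L u" and v: "v \<noteq> 0"
  have "QQ K L (inverse (norm v) *\<^sub>R v)" using H v by (simp add: norm_sgn[unfolded sgn_div_norm] divide_inverse_commute)
  then show "QQ K L v" using QQ_scale[of "inverse (norm v)" K L v] v by simp
next
  fix u :: 'a assume "\<forall>v. v \<noteq> 0 \<longrightarrow> QQ K L v" "norm u = 1"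
  then show "QQ K L u" by (metis norm_zero zero_neq_one)
qed

lemma QQ_lin:
  fixes \<psi> :: "'a::euclidean_space \<Rightarrow> 'a"
  assumes lin: "linear \<psi>" and inj: "inj \<psi>"
  shows "QQ (\<psi> ` K) (\<psi> ` L) (\<psi> v) \<longleftrightarrow> QQ K L v"
proof
  have surj: "surj \<psi>" using lin inj by (simp add: linear_inj_imp_surj)
  assume "QQ (\<psi> ` K) (\<psi> ` L) (\<psi> v)"
  then obtain w where w: "\<forall>x\<in>\<psi> ` K. \<exists>t. x + w + t *\<^sub>R \<psi> v \<in> \<psi> ` L" unfolding QQ_def by blast
  obtain w0 where w0: "w = \<psi> w0" using surj by (metis surjD)
  have "\<forall>x\<in>K. \<exists>t. x + w0 + t *\<^sub>R v \<in> L"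
  proof
    fix x assume "x \<in> K"
    then obtain t where "\<psi> x + w + t *\<^sub>R \<psi> v \<in> \<psi> ` L" using w by blast
    moreover have "\<psi> x + w + t *\<^sub>R \<psi> v = \<psi> (x + w0 + t *\<^sub>R v)"
      using w0 lin by (simp add: linear_add linear_scale)
    ultimately have "x + w0 + t *\<^sub>R v \<in> L" using inj by (metis inj_image_mem_iff)
    then show "\<exists>t. x + w0 + t *\<^sub>R v \<in> L" by blast
  qed
  then show "QQ K L v" unfolding QQ_def by blast
next
  assume "QQ K L v"
  then obtain w where w: "\<forall>x\<in>K. \<exists>t. x + w + t *\<^sub>R v \<in> L" unfolding QQ_def by blast
  have "\<forall>x\<in>\<psi> ` K. \<exists>t. x + \<psi> w + t *\<^sub>R \<psi> v \<in> \<psi> ` L"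
  proof
    fix y assume "y \<in> \<psi> ` K"
    then obtain x where x: "x \<in> K" "y = \<psi> x" by blast
    then obtain t where "x + w + t *\<^sub>R v \<in> L" using w by blast
    moreover have "\<psi> x + \<psi> w + t *\<^sub>R \<psi> v = \<psi> (x + w + t *\<^sub>R v)"
      using lin by (simp add: linear_add linear_scale)
    ultimately show "\<exists>t. y + \<psi> w + t *\<^sub>R \<psi> v \<in> \<psi> ` L" using x by (metis imageI)
  qed
  then show "QQ (\<psi> ` K) (\<psi> ` L) (\<psi> v)" unfolding QQ_def by blast
qed

theorem proposition4p2:
  fixes K L :: "'a::euclidean_space set" and \<psi> :: "'a \<Rightarrow> 'a"
  assumes "compact K" "convex K" "compact L" "convex L"
    and "linear \<psi>" "inj \<psi>"
  shows "(\<forall>u. norm u = 1 \<longrightarrow> contains_translate u (proj_hyp u L) (proj_hyp u K)) \<longleftrightarrow>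
         (\<forall>u. norm u = 1 \<longrightarrow> contains_translate u (proj_hyp u (\<psi> ` L)) (proj_hyp u (\<psi> ` K)))"
proof -
  have surj: "surj \<psi>" using assms(5,6) by (simp add: linear_inj_imp_surj)
  have z: "\<psi> v = 0 \<longleftrightarrow> v = 0" for v
    using assms(5,6) by (metis inj_eq linear_0)
  have "(\<forall>v. v \<noteq> 0 \<longrightarrow> QQ K L v) \<longleftrightarrow> (\<forall>v. v \<noteq> 0 \<longrightarrow> QQ (\<psi> ` K) (\<psi> ` L) v)"
  proof
    assume H: "\<forall>v. v \<noteq> 0 \<longrightarrow> QQ K L v"
    show "\<forall>v. v \<noteq> 0 \<longrightarrow> QQ (\<psi> ` K) (\<psi> ` L) v"
    proof (intro allI impI)
      fix v assume v: "v \<noteq> (0::'a)"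
      obtain v0 where v0: "v = \<psi> v0" using surj by (metis surjD)
      then have "v0 \<noteq> 0" using v z by blast
      then show "QQ (\<psi> ` K) (\<psi> ` L) v" using H QQ_lin[OF assms(5,6)] v0 by blast
    qed
  next
    assume H: "\<forall>v. v \<noteq> 0 \<longrightarrow> QQ (\<psi> ` K) (\<psi> ` L) v"
    show "\<forall>v. v \<noteq> 0 \<longrightarrow> QQ K L v"
      using H QQ_lin[OF assms(5,6)] z by metis
  qed
  then show ?thesis
    using all_QQ[of K L] all_QQ[of "\<psi> ` K" "\<psi> ` L"] ct_iff by (metis (no_types, lifting))
qed

end
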